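(* Let $\mathcal M$ be an oriented matroid program of rank $r$ on $[n]\cup\{f,g\}$ with digraph $K_f$, and let $\tilde v$ be a node of $K_f$ that is neither the source nor the sink of $K_f$. Then for each $e\in\tilde v$ there is a cocircuit $Y^{e}$ of $\mathcal M/\{f,g\}$ with $Y^{e}_e=+$ and $Y^e_{e'}\in\{+,0\}$ for all $e'\in\tilde v$. Consequently the composition of the $Y^e$, $e\in\tilde v$, is a covector of $\mathcal M/\{f,g\}$ that is positive on every element of $\tilde v$.
   Context: Oriented matroid conventions: covectors, cocircuits, vectors, circuits, deletion $\setminus$, contraction $/$, rank are as usual; $\underline Y$ is the support; composition $(X\circ Y)_e=X_e$ if $X_e\ne0$, else $Y_e$. A covector is nonnegative if all entries are in $\{+,0\}$. Oriented matroid program: $\mathcal M$ is an oriented matroid of rank $r$ on $E=[n]\cup\{f,g\}$ such that (a) every nonnegative cocircuit $Y$ of $\mathcal M\setminus f$ has $Y_g\neq 0$; (b) for every $e\in[n]$ there is a nonnegative cocircuit $Y$ of $\mathcal M\setminus f$ with $Y_e=+$; (c) every circuit of $\mathcal M$ whose support contains $f$ has support of size $r+1$. Nodes: the sets $v=[n]\setminus\underline Y$, $Y$ a nonnegative cocircuit of $\mathcal M\setminus f$. For each node $v$ let $Y^v$ be the cocircuit of $\mathcal M$ that is nonnegative on $E\setminus\{f\}$, has $Y^v_f\neq0\neq Y^v_g$, and zero set $v$ in $[n]$. Distinct nodes $v,v'$ are adjacent if $v\cap v'$ has rank $r-2$ in $\mathcal M$. For adjacent $v,v'$, let $Y''$ be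 the cocircuit of $\mathcal M$ obtained by eliminating $g$ between $Y^v$ and $-Y^{v'}$; it has $Y''_g=0$, vanishes on $v\cap v'$, is $+$ on $v'\setminus v$, $-$ on $v\setminus v'$, and $Y''_f\ne 0$. $K_f$: arc from $v$ to $v'$ if $Y''_f=Y''_e$ for $e\in v\setminus v'$, otherwise from $v'$ to $v$; it has a unique source and a unique sink. *)

theory Defs
  imports Main
begin

datatype sign = Neg | Zer | Pos

definition sneg :: "sign \<Rightarrow> sign" where
  "sneg s = (case s of Neg \<Rightarrow> Pos | Zer \<Rightarrow> Zer | Pos \<Rightarrow> Neg)"

definition smult :: "sign \<Rightarrow> sign \<Rightarrow> sign" where
  "smult s t = (if s = Zer \<or> t = Zer then Zer else if s = t then Pos else Neg)"

type_synonym 'a svec = "'a \<Rightarrow> sign"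

definition zero_sv :: "'a svec" where
  "zero_sv = (\<lambda>e. Zer)"

definition neg_sv :: "'a svec \<Rightarrow> 'a svec" where
  "neg_sv X = (\<lambda>e. sneg (X e))"

definition supp :: "'a svec \<Rightarrow> 'a set" where
  "supp X = {e. X e \<noteq> Zer}"

definition comp_sv :: "'a svec \<Rightarrow> 'a svec \<Rightarrow> 'a svec" where
  "comp_sv X Y = (\<lambda>e. if X e \<noteq> Zer then X e else Y e)"

definition comp_list :: "'a svec list \<Rightarrow> 'a svec" where
  "comp_list Xs = foldr comp_sv Xs zero_sv"

definition sep :: "'a svec \<Rightarrow> 'a svec \<Rightarrow> 'a set" where
  "sep X Y = {e. X e \<noteq> Zer \<and> Y e = sneg (X e)}"

definition restrict_sv :: "'a set \<Rightarrow> 'a svec \<Rightarrow> 'a svec" where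
  "restrict_sv A X = (\<lambda>e. if e \<in> A then X e else Zer)"

definition orth :: "'a svec \<Rightarrow> 'a svec \<Rightarrow> bool" where
  "orth X Y \<longleftrightarrow> (\<forall>e. smult (X e) (Y e) = Zer)
     \<or> (\<exists>e h. smult (X e) (Y e) = Pos \<and> smult (X h) (Y h) = Neg)"

text \<open>An oriented matroid is a pair (ground set E, set of covectors L); sign vectors
  vanish outside E.  Covector axioms (L0)-(L3) of Bjoerner et al., Def. 4.1.1.\<close>
type_synonym 'a om = "'a set \<times> 'a svec set"

definition ground :: "'a om \<Rightarrow> 'a set" where "ground M = fst M"
definition covectors :: "'a om \<Rightarrow> 'a svec set" where "covectors M = snd M"

definition is_OM :: "'a om \<Rightarrow> bool" where
  "is_OM M \<longleftrightarrow> finite (ground M)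
    \<and> (\<forall>X\<in>covectors M. supp X \<subseteq> ground M)
    \<and> zero_sv \<in> covectors M
    \<and> (\<forall>X\<in>covectors M. neg_sv X \<in> covectors M)
    \<and> (\<forall>X\<in>covectors M. \<forall>Y\<in>covectors M. comp_sv X Y \<in> covectors M)
    \<and> (\<forall>X\<in>covectors M. \<forall>Y\<in>covectors M. \<forall>e\<in>sep X Y.
         \<exists>Z\<in>covectors M. Z e = Zer \<and> (\<forall>h. h \<notin> sep X Y \<longrightarrow> Z h = comp_sv X Y h))"

definition cocircuits :: "'a om \<Rightarrow> 'a svec set" where
  "cocircuits M = {X \<in> covectors M. X \<noteq> zero_sv \<and>
      \<not> (\<exists>Y\<in>covectors M. Y \<noteq> zero_sv \<and> supp Y \<subset> supp X)}"

definition vectors :: "'a om \<Rightarrow> 'a svec set" where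
  "vectors M = {X. supp X \<subseteq> ground M \<and> (\<forall>Y\<in>covectors M. orth X Y)}"

definition circuits :: "'a om \<Rightarrow> 'a svec set" where
  "circuits M = {X \<in> vectors M. X \<noteq> zero_sv \<and>
      \<not> (\<exists>Y\<in>vectors M. Y \<noteq> zero_sv \<and> supp Y \<subset> supp X)}"

definition om_indep :: "'a om \<Rightarrow> 'a set \<Rightarrow> bool" where
  "om_indep M I \<longleftrightarrow> I \<subseteq> ground M \<and> \<not> (\<exists>C\<in>circuits M. supp C \<subseteq> I)"

definition om_rank_of :: "'a om \<Rightarrow> 'a set \<Rightarrow> nat" where
  "om_rank_of M A = Max (card ` {I. I \<subseteq> A \<and> om_indep M I})"

definition om_rank :: "'a om \<Rightarrow> nat" where
  "om_rank M = om_rank_of M (ground M)"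

definition deletion :: "'a om \<Rightarrow> 'a set \<Rightarrow> 'a om" where
  "deletion M A = (ground M - A, restrict_sv (ground M - A) ` covectors M)"

definition contraction :: "'a om \<Rightarrow> 'a set \<Rightarrow> 'a om" where
  "contraction M A = (ground M - A,
     restrict_sv (ground M - A) ` {X \<in> covectors M. \<forall>a\<in>A. X a = Zer})"

definition nonneg_on :: "'a set \<Rightarrow> 'a svec \<Rightarrow> bool" where
  "nonneg_on A X \<longleftrightarrow> (\<forall>e\<in>A. X e \<noteq> Neg)"

definition nonneg :: "'a svec \<Rightarrow> bool" where
  "nonneg X \<longleftrightarrow> (\<forall>e. X e \<noteq> Neg)"

text \<open>\<open>N\<close> plays the role of \<open>[n]\<close>; the ground set is \<open>N \<union> {f,g}\<close>.\<close>
definition OM_program :: "'a om \<Rightarrow> 'a set \<Rightarrow> 'a \<Rightarrow> 'a \<Rightarrow> nat \<Rightarrow> bool" where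
  "OM_program M N f g r \<longleftrightarrow> is_OM M \<and> ground M = N \<union> {f, g} \<and> f \<noteq> g
     \<and> f \<notin> N \<and> g \<notin> N \<and> om_rank M = r
     \<and> (\<forall>Y\<in>cocircuits (deletion M {f}). nonneg Y \<longrightarrow> Y g \<noteq> Zer)
     \<and> (\<forall>e\<in>N. \<exists>Y\<in>cocircuits (deletion M {f}). nonneg Y \<and> Y e = Pos)
     \<and> (\<forall>C\<in>circuits M. f \<in> supp C \<longrightarrow> card (supp C) = r + 1)"

definition is_node :: "'a om \<Rightarrow> 'a set \<Rightarrow> 'a \<Rightarrow> 'a set \<Rightarrow> bool" where
  "is_node M N f v \<longleftrightarrow> (\<exists>Y\<in>cocircuits (deletion M {f}). nonneg Y \<and> v = N - supp Y)"

definition adjacent :: "'a om \<Rightarrow> 'a set \<Rightarrow> 'a \<Rightarrow> nat \<Rightarrow> 'a set \<Rightarrow> 'a set \<Rightarrow> bool" where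
  "adjacent M N f r v v' \<longleftrightarrow> is_node M N f v \<and> is_node M N f v' \<and> v \<noteq> v'
     \<and> om_rank_of M (v \<inter> v') = r - 2"

text \<open>The cocircuit \<open>Y''\<close> obtained by eliminating g between \<open>Y^v\<close> and \<open>-Y^{v'}\<close>.\<close>
definition elim_cocircuit :: "'a om \<Rightarrow> 'a \<Rightarrow> 'a set \<Rightarrow> 'a set \<Rightarrow> 'a svec \<Rightarrow> bool" where
  "elim_cocircuit M g v v' Y \<longleftrightarrow> Y \<in> cocircuits M \<and> Y g = Zer
     \<and> (\<forall>e\<in>v \<inter> v'. Y e = Zer) \<and> (\<forall>e\<in>v' - v. Y e = Pos) \<and> (\<forall>e\<in>v - v'. Y e = Neg)"

definition Kf_arc :: "'a om \<Rightarrow> 'a set \<Rightarrow> 'a \<Rightarrow> 'a \<Rightarrow> nat \<Rightarrow> 'a set \<Rightarrow> 'a set \<Rightarrow> bool" where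
  "Kf_arc M N f g r v v' \<longleftrightarrow> adjacent M N f r v v' \<and>
     (\<exists>Y. elim_cocircuit M g v v' Y \<and> Y f \<noteq> Zer \<and> (\<forall>e\<in>v - v'. Y f = Y e))"

definition Kf_source :: "'a om \<Rightarrow> 'a set \<Rightarrow> 'a \<Rightarrow> 'a \<Rightarrow> nat \<Rightarrow> 'a set \<Rightarrow> bool" where
  "Kf_source M N f g r v \<longleftrightarrow> is_node M N f v \<and> \<not> (\<exists>u. Kf_arc M N f g r u v)"

definition Kf_sink :: "'a om \<Rightarrow> 'a set \<Rightarrow> 'a \<Rightarrow> 'a \<Rightarrow> nat \<Rightarrow> 'a set \<Rightarrow> bool" where
  "Kf_sink M N f g r v \<longleftrightarrow> is_node M N f v \<and> \<not> (\<exists>u. Kf_arc M N f g r v u)"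

end

theory Submission
  imports Defs
begin

lemma sneg_simps[simp]: "sneg Neg = Pos" "sneg Zer = Zer" "sneg Pos = Neg"
  by (simp_all add: sneg_def)

lemma sneg_eq_Zer[simp]: "sneg s = Zer \<longleftrightarrow> s = Zer"
  by (cases s) (simp_all add: sneg_def)

lemma Zer_eq_sneg[simp]: "Zer = sneg s \<longleftrightarrow> s = Zer"
  by (cases s) (simp_all add: sneg_def)

lemma sign_cases_eq: "s \<noteq> Zer \<Longrightarrow> t \<noteq> Zer \<Longrightarrow> t \<noteq> sneg s \<Longrightarrow> t = s"
  by (cases s; cases t) (simp_all add: sneg_def)

lemma sneg_neq: "s \<noteq> Zer \<Longrightarrow> sneg s \<noteq> s"
  by (cases s) (simp_all add: sneg_def)

lemma sneg_sneg[simp]: "sneg (sneg s) = s" by (cases s) (simp_all add: sneg_def)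

lemma supp_neg[simp]: "supp (neg_sv X) = supp X"
  by (simp add: supp_def neg_sv_def)

lemma elim_sub:
  assumes elimL: "\<forall>X\<in>L. \<forall>Y\<in>L. \<forall>e\<in>sep X Y. \<exists>Z\<in>L. Z e = Zer \<and> (\<forall>h. h \<notin> sep X Y \<longrightarrow> Z h = comp_sv X Y h)"
    and X: "X \<in> L" and Y: "Y \<in> L" and sub: "supp Y \<subseteq> supp X" and k: "k \<in> sep X Y"
  shows "\<exists>Z\<in>L. Z k = Zer \<and> (\<forall>h. h \<notin> sep X Y \<longrightarrow> Z h = X h)"
proof -
  obtain Z where "Z \<in> L" "Z k = Zer" "\<forall>h. h \<notin> sep X Y \<longrightarrow> Z h = comp_sv X Y h"
    using elimL X Y k by blast
  moreover have "comp_sv X Y h = X h" for h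
    using sub by (auto simp: comp_sv_def supp_def)
  ultimately show ?thesis by auto
qed

lemma elim_step:
  assumes "Z k = Zer" "k \<in> sep X Y" "\<forall>h. h \<notin> sep X Y \<longrightarrow> Z h = X h"
  shows "supp Z \<subset> supp X" "sep X Z \<subseteq> sep X Y - {k}"
proof -
  have "supp Z \<subseteq> supp X"
  proof
    fix h assume "h \<in> supp Z"
    then show "h \<in> supp X" using assms(3) by (cases "h \<in> sep X Y") (auto simp: supp_def sep_def)
  qed
  moreover have "k \<in> supp X" "k \<notin> supp Z" using assms(1,2) by (auto simp: supp_def sep_def)
  ultimately show "supp Z \<subset> supp X" by blast
  show "sep X Z \<subseteq> sep X Y - {k}"
  proof
    fix h assume h: "h \<in> sep X Z"
    then have hX: "X h \<noteq> Zer" "Z h = sneg (X h)" by (auto simp: sep_def)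
    have "h \<in> sep X Y" using assms(3) hX sneg_neq by metis
    moreover have "h \<noteq> k" using assms(1) hX by auto
    ultimately show "h \<in> sep X Y - {k}" by blast
  qed
qed

lemma conformal_cocircuit:
  fixes L :: "'a svec set"
  assumes negL: "\<forall>X\<in>L. neg_sv X \<in> L"
    and elimL: "\<forall>X\<in>L. \<forall>Y\<in>L. \<forall>e\<in>sep X Y. \<exists>Z\<in>L. Z e = Zer \<and> (\<forall>h. h \<notin> sep X Y \<longrightarrow> Z h = comp_sv X Y h)"
    and finL: "\<forall>X\<in>L. finite (supp X)"
  shows "X \<in> L \<Longrightarrow> X e \<noteq> Zer \<Longrightarrow> \<exists>C\<in>L. C \<noteq> zero_sv \<and> \<not>(\<exists>Y\<in>L. Y \<noteq> zero_sv \<and> supp Y \<subset> supp C) \<and> C e = X e \<and> (\<forall>j. C j \<noteq> Zer \<longrightarrow> C j = X j)"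
proof (induct X arbitrary: e rule: measure_induct_rule[where f="\<lambda>X. card (supp X)"])
  case (less X e)
  note IH = less.hyps
  have X: "X \<in> L" "X e \<noteq> Zer" by fact+
  have finX: "finite (supp X)" using finL X by auto
  let ?G = "\<exists>C\<in>L. C \<noteq> zero_sv \<and> \<not>(\<exists>Y\<in>L. Y \<noteq> zero_sv \<and> supp Y \<subset> supp C) \<and> C e = X e \<and> (\<forall>j. C j \<noteq> Zer \<longrightarrow> C j = X j)"
  have R: "Y \<in> L \<Longrightarrow> Y e = X e \<Longrightarrow> supp Y \<subset> supp X \<Longrightarrow> ?G" for Y
  proof (induct Y rule: measure_induct_rule[where f="\<lambda>Y. card (sep X Y)"])
    case (less Y)
    show ?G
    proof (cases "sep X Y = {}")
      case True
      have confY: "\<forall>j. Y j \<noteq> Zer \<longrightarrow> Y j = X j"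
      proof (intro allI impI)
        fix j assume Yj: "Y j \<noteq> Zer"
        then have Xj: "X j \<noteq> Zer" using less.prems(3) by (auto simp: supp_def)
        moreover have "Y j \<noteq> sneg (X j)" using True Xj by (auto simp: sep_def)
        ultimately show "Y j = X j" using Yj sign_cases_eq by blast
      qed
      have "card (supp Y) < card (supp X)" using less.prems(3) finX psubset_card_mono by blast
      then obtain C where C: "C \<in> L" "C \<noteq> zero_sv" "\<not>(\<exists>W\<in>L. W \<noteq> zero_sv \<and> supp W \<subset> supp C)"
          "C e = Y e" "\<forall>j. C j \<noteq> Zer \<longrightarrow> C j = Y j"
        using IH[of Y e] less.prems X(2) by auto
      show ?G using C confY less.prems(2) by (intro bexI[of _ C]) auto
    next
      case False
      then obtain k where k: "k \<in> sep X Y" by blast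
      obtain Z where Z: "Z \<in> L" "Z k = Zer" "\<forall>h. h \<notin> sep X Y \<longrightarrow> Z h = X h"
        using elim_sub[OF elimL X(1) less.prems(1) _ k] less.prems(3) by blast
      have st: "supp Z \<subset> supp X" "sep X Z \<subseteq> sep X Y - {k}" using elim_step[OF Z(2) k Z(3)] by auto
      have "e \<notin> sep X Y"
      proof
        assume "e \<in> sep X Y"
        then have "Y e = sneg (X e)" by (simp add: sep_def)
        then show False using less.prems(2) sneg_neq[OF X(2)] by simp
      qed
      then have Ze: "Z e = X e" using Z(3) by auto
      have finS: "finite (sep X Y)"
        by (rule finite_subset[OF _ finX]) (auto simp: sep_def supp_def)
      have "card (sep X Z) < card (sep X Y)"
        proof -
        have "card (sep X Z) \<le> card (sep X Y - {k})"
          using st(2) finS by (intro card_mono) auto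
        also have "\<dots> < card (sep X Y)" using finS k by (rule card_Diff1_less)
        finally show ?thesis .
      qed
      then show ?G using less.hyps[of Z] Z(1) Ze st(1) by auto
    qed
  qed
  show ?G
  proof (cases "\<exists>W\<in>L. W \<noteq> zero_sv \<and> supp W \<subset> supp X")
    case False
    have "X \<noteq> zero_sv" using X(2) by (auto simp: zero_sv_def)
    then show ?G using False X by auto
  next
    case True
    then obtain W where W: "W \<in> L" "W \<noteq> zero_sv" "supp W \<subset> supp X" by blast
    show ?G
    proof (cases "W e = Zer")
      case False
      show ?G
      proof (cases "W e = X e")
        case True then show ?G using R W by auto
      next
        case ne: False
        have "neg_sv W e = X e"
          using False ne X(2) by (cases "W e"; cases "X e") (auto simp: neg_sv_def sneg_def)
        then show ?G using R[of "neg_sv W"] W negL by auto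
      qed
    next
      case We: True
      obtain j where j: "W j \<noteq> Zer" using W(2) by (auto simp: zero_sv_def)
      have Xj: "X j \<noteq> Zer" using j W(3) by (auto simp: supp_def)
      obtain Y0 where Y0: "Y0 \<in> L" "supp Y0 = supp W" "Y0 e = Zer" "j \<in> sep X Y0"
      proof (cases "W j = sneg (X j)")
        case True then have "j \<in> sep X W" using Xj by (simp add: sep_def)
        then show ?thesis by (rule that[OF W(1) refl We])
      next
        case False
        have "neg_sv W j = sneg (X j)" using False j Xj
          by (cases "W j"; cases "X j") (auto simp: neg_sv_def sneg_def)
        then have a1: "j \<in> sep X (neg_sv W)" using Xj by (simp add: sep_def)
        have a2: "neg_sv W e = Zer" using We by (simp add: neg_sv_def)
        have a3: "neg_sv W \<in> L" using negL W(1) by blast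
        show ?thesis by (rule that[OF a3 supp_neg a2 a1])
      qed
      obtain Z where Z: "Z \<in> L" "Z j = Zer" "\<forall>h. h \<notin> sep X Y0 \<longrightarrow> Z h = X h"
        using elim_sub[OF elimL X(1) Y0(1) _ Y0(4)] Y0(2) W(3) by blast
      have st: "supp Z \<subset> supp X" using elim_step[OF Z(2) Y0(4) Z(3)] by auto
      have "e \<notin> sep X Y0" using Y0(3) X(2) by (auto simp: sep_def)
      then have "Z e = X e" using Z(3) by auto
      then show ?G using R Z(1) st by auto
    qed
  qed
qed



lemma cov_contr: "covectors (contraction M A) = restrict_sv (ground M - A) ` {X \<in> covectors M. \<forall>a\<in>A. X a = Zer}"
  by (simp add: contraction_def covectors_def ground_def)

lemma cov_del: "covectors (deletion M A) = restrict_sv (ground M - A) ` covectors M"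
  by (simp add: deletion_def covectors_def ground_def)

lemma contr_cov:
  assumes "is_OM M"
  shows "covectors (contraction M {f,g}) = {X \<in> covectors M. X f = Zer \<and> X g = Zer}"
proof -
  have sub: "\<forall>X\<in>covectors M. supp X \<subseteq> ground M" using assms by (simp add: is_OM_def)
  have r: "restrict_sv (ground M - {f,g}) X = X" if "X \<in> covectors M" "X f = Zer" "X g = Zer" for X
  proof (rule ext)
    fix e show "restrict_sv (ground M - {f,g}) X e = X e"
    proof (cases "e \<in> ground M")
      case False
      then have "X e = Zer" using sub that(1) by (auto simp: supp_def)
      then show ?thesis by (simp add: restrict_sv_def)
    qed (use that in \<open>auto simp: restrict_sv_def\<close>)
  qed
  show ?thesis unfolding cov_contr
  proof
    show "restrict_sv (ground M - {f, g}) ` {X \<in> covectors M. \<forall>a\<in>{f, g}. X a = Zer} \<subseteq> {X \<in> covectors M. X f = Zer \<and> X g = Zer}"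
      using r by auto
    show "{X \<in> covectors M. X f = Zer \<and> X g = Zer} \<subseteq> restrict_sv (ground M - {f, g}) ` {X \<in> covectors M. \<forall>a\<in>{f, g}. X a = Zer}"
    proof
      fix X assume X: "X \<in> {X \<in> covectors M. X f = Zer \<and> X g = Zer}"
      then have "X = restrict_sv (ground M - {f,g}) X" using r by auto
      moreover have "X \<in> {X \<in> covectors M. \<forall>a\<in>{f, g}. X a = Zer}" using X by auto
      ultimately show "X \<in> restrict_sv (ground M - {f, g}) ` {X \<in> covectors M. \<forall>a\<in>{f, g}. X a = Zer}"
        by (rule image_eqI)
    qed
  qed
qed

lemma comp_list_in:
  assumes "zero_sv \<in> L" "\<forall>X\<in>L. \<forall>Y\<in>L. comp_sv X Y \<in> L"
  shows "set Xs \<subseteq> L \<Longrightarrow> comp_list Xs \<in> L"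
  by (induction Xs) (use assms in \<open>auto simp: comp_list_def\<close>)

lemma comp_list_pos:
  "(\<forall>X\<in>set Xs. X e \<noteq> Neg) \<Longrightarrow> (\<exists>X\<in>set Xs. X e = Pos) \<Longrightarrow> comp_list Xs e = Pos"
proof (induction Xs)
  case Nil then show ?case by simp
next
  case (Cons a Xs)
  show ?case
  proof (cases "a e = Zer")
    case True
    then have "comp_list (a # Xs) e = comp_list Xs e" by (simp add: comp_list_def comp_sv_def)
    with Cons True show ?thesis by auto
  next
    case False
    then have "comp_list (a # Xs) e = a e" by (simp add: comp_list_def comp_sv_def)
    with Cons False show ?thesis by (cases "a e") auto
  qed
qed

lemma nonneg_Pos: "s \<noteq> Neg \<Longrightarrow> s \<noteq> Zer \<Longrightarrow> s = Pos"
  by (cases s) auto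

lemma combine:
  assumes elimL: "\<forall>X\<in>L. \<forall>Y\<in>L. \<forall>e\<in>sep X Y. \<exists>Z\<in>L. Z e = Zer \<and> (\<forall>h. h \<notin> sep X Y \<longrightarrow> Z h = comp_sv X Y h)"
    and X: "X \<in> L" "X f \<noteq> Zer" "X g = Zer" "X e = Pos" "\<forall>h\<in>v. X h \<noteq> Neg"
    and ev: "e \<in> v"
    and A: "A \<in> L" "A f = sneg (X f)" "A g = Zer" "\<forall>h\<in>v. A h \<noteq> Neg"
  shows "\<exists>T\<in>L. T f = Zer \<and> T g = Zer \<and> T e = Pos \<and> (\<forall>h\<in>v. T h \<noteq> Neg)"
proof -
  have "f \<in> sep X A" using X A by (simp add: sep_def)
  then obtain T where T: "T \<in> L" "T f = Zer" "\<forall>h. h \<notin> sep X A \<longrightarrow> T h = comp_sv X A h"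
    using elimL X(1) A(1) by blast
  have "g \<notin> sep X A" using X by (simp add: sep_def)
  then have Tg: "T g = Zer" using T(3) X(3) A(3) by (simp add: comp_sv_def)
  have Tv: "T h = comp_sv X A h" if "h \<in> v" for h
  proof -
    have "h \<notin> sep X A"
    proof
      assume "h \<in> sep X A"
      then have "X h \<noteq> Zer" "A h = sneg (X h)" by (auto simp: sep_def)
      then have "X h = Pos" using X(5) that nonneg_Pos by blast
      then show False using \<open>A h = sneg (X h)\<close> A(4) that by auto
    qed
    then show ?thesis using T(3) by blast
  qed
  have "A e \<noteq> Neg" using A(4) ev by blast
  then have "e \<notin> sep X A" using X(4) by (auto simp: sep_def)
  then have Te: "T e = Pos" using T(3) X(4) by (simp add: comp_sv_def)
  have "\<forall>h\<in>v. T h \<noteq> Neg" using Tv X(5) A(4) by (auto simp: comp_sv_def)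
  then show ?thesis using T Tg Te by blast
qed

theorem lemma5p5:
  fixes M :: "'a om" and N :: "'a set" and f g :: 'a and r :: nat and v :: "'a set"
  assumes "OM_program M N f g r"
    and "is_node M N f v"
    and "\<not> Kf_source M N f g r v"
    and "\<not> Kf_sink M N f g r v"
  shows "\<exists>Ys :: 'a \<Rightarrow> 'a svec.
           (\<forall>e\<in>v. Ys e \<in> cocircuits (contraction M {f, g}) \<and> Ys e e = Pos
                  \<and> nonneg_on v (Ys e))
         \<and> (\<forall>es. set es = v \<longrightarrow>
              comp_list (map Ys es) \<in> covectors (contraction M {f, g})
              \<and> (\<forall>e\<in>v. comp_list (map Ys es) e = Pos))"
proof -
  have om: "is_OM M" and gr: "ground M = N \<union> {f,g}" and fg: "f \<noteq> g" and fN: "f \<notin> N"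
    and pa: "\<forall>Y\<in>cocircuits (deletion M {f}). nonneg Y \<longrightarrow> Y g \<noteq> Zer"
    and pb: "\<forall>e\<in>N. \<exists>Y\<in>cocircuits (deletion M {f}). nonneg Y \<and> Y e = Pos"
    using assms(1) unfolding OM_program_def by auto
  let ?L = "covectors M"
  have negL: "\<forall>X\<in>?L. neg_sv X \<in> ?L"
    and elimL: "\<forall>X\<in>?L. \<forall>Y\<in>?L. \<forall>e\<in>sep X Y. \<exists>Z\<in>?L. Z e = Zer \<and> (\<forall>h. h \<notin> sep X Y \<longrightarrow> Z h = comp_sv X Y h)"
    and zeroL: "zero_sv \<in> ?L" and compL: "\<forall>X\<in>?L. \<forall>Y\<in>?L. comp_sv X Y \<in> ?L"
    and subL: "\<forall>X\<in>?L. supp X \<subseteq> ground M" and fin: "finite (ground M)"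
    using om unfolding is_OM_def by auto
  let ?D = "ground M - {f}"
  have gD: "g \<in> ?D" using gr fg by auto
  have ND: "N \<subseteq> ?D" using gr fN by auto
  have node: "\<exists>Y P. Y \<in> cocircuits (deletion M {f}) \<and> nonneg Y \<and> u = N - supp Y \<and> P \<in> ?L
      \<and> Y = restrict_sv ?D P \<and> Y g = Pos" if un: "is_node M N f u" for u
  proof -
    obtain Y where Y: "Y \<in> cocircuits (deletion M {f})" "nonneg Y" "u = N - supp Y"
      using un unfolding is_node_def by blast
    then have "Y \<in> covectors (deletion M {f})" by (simp add: cocircuits_def)
    then obtain P where "P \<in> ?L" "Y = restrict_sv ?D P" unfolding cov_del by blast
    moreover have "Y g = Pos" using pa Y nonneg_Pos unfolding nonneg_def by blast
    ultimately show ?thesis using Y by blast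
  qed
  have incomp: "u = w" if u: "is_node M N f u" and w: "is_node M N f w" and uw: "u \<subseteq> w" for u w
  proof (rule ccontr)
    assume "u \<noteq> w"
    then obtain j where j: "j \<in> w" "j \<notin> u" using uw by blast
    obtain Yu Pu where Yu: "Yu \<in> cocircuits (deletion M {f})" "u = N - supp Yu" "Yu = restrict_sv ?D Pu" "Yu g = Pos"
      using node[OF u] by blast
    obtain Yw Pw where Yw: "Yw \<in> cocircuits (deletion M {f})" "w = N - supp Yw" "Yw = restrict_sv ?D Pw" "Yw g = Pos"
      using node[OF w] by blast
    have jN: "j \<in> N" using j Yw(2) by auto
    have "supp Yw \<subseteq> supp Yu"
    proof
      fix h assume h: "h \<in> supp Yw"
      then have "h \<in> ?D" using Yw(3) unfolding supp_def restrict_sv_def by (auto split: if_splits)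
      then have "h = g \<or> h \<in> N" using gr by auto
      then show "h \<in> supp Yu"
      proof
        assume "h = g" then show ?thesis using Yu(4) by (simp add: supp_def)
      next
        assume hN: "h \<in> N"
        then have "h \<notin> w" using h Yw(2) by auto
        then have "h \<notin> u" using uw by auto
        then show ?thesis using hN Yu(2) by auto
      qed
    qed
    moreover have "j \<in> supp Yu" "j \<notin> supp Yw" using j jN Yu(2) Yw(2) by auto
    ultimately have "supp Yw \<subset> supp Yu" by blast
    moreover have "Yw \<in> covectors (deletion M {f})" "Yw \<noteq> zero_sv" using Yw(1) by (auto simp: cocircuits_def)
    ultimately show False using Yu(1) unfolding cocircuits_def by blast
  qed
  obtain u Y1 where a1: "adjacent M N f r u v" "elim_cocircuit M g u v Y1" "Y1 f \<noteq> Zer" "\<forall>e\<in>u - v. Y1 f = Y1 e"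
    using assms(2,3) unfolding Kf_source_def Kf_arc_def by blast
  have "u - v \<noteq> {}" using a1(1) incomp unfolding adjacent_def by blast
  then obtain e0 where e0: "e0 \<in> u - v" by blast
  have Y1v: "\<forall>h\<in>v. Y1 h \<noteq> Neg"
  proof
    fix h assume h: "h \<in> v"
    show "Y1 h \<noteq> Neg"
    proof (cases "h \<in> u")
      case True then show ?thesis using h a1(2) unfolding elim_cocircuit_def by auto
    next
      case False then show ?thesis using h a1(2) unfolding elim_cocircuit_def by auto
    qed
  qed
  have Y1: "Y1 \<in> ?L" "Y1 g = Zer" "\<forall>h\<in>v. Y1 h \<noteq> Neg" "Y1 f = Neg"
    using a1(2) a1(4) e0 Y1v unfolding elim_cocircuit_def cocircuits_def by auto
  obtain w Y2 where a2: "adjacent M N f r v w" "elim_cocircuit M g v w Y2" "Y2 f \<noteq> Zer" "\<forall>e\<in>v - w. Y2 f = Y2 e"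
    using assms(2,4) unfolding Kf_sink_def Kf_arc_def by blast
  have "v - w \<noteq> {}" using a2(1) incomp unfolding adjacent_def by blast
  then obtain e1 where e1: "e1 \<in> v - w" by blast
  have Y2v: "\<forall>h\<in>v. Y2 h \<noteq> Pos"
  proof
    fix h assume h: "h \<in> v"
    show "Y2 h \<noteq> Pos"
    proof (cases "h \<in> w")
      case True then show ?thesis using h a2(2) unfolding elim_cocircuit_def by auto
    next
      case False then show ?thesis using h a2(2) unfolding elim_cocircuit_def by auto
    qed
  qed
  have Y2: "Y2 \<in> ?L" "Y2 g = Zer" "\<forall>h\<in>v. Y2 h \<noteq> Pos" "Y2 f = Neg"
    using a2(2) a2(4) e1 Y2v unfolding elim_cocircuit_def cocircuits_def by auto
  have B: "neg_sv Y2 \<in> ?L" "neg_sv Y2 g = Zer" "\<forall>h\<in>v. neg_sv Y2 h \<noteq> Neg" "neg_sv Y2 f = Pos"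
    using Y2 negL by (auto simp: neg_sv_def sneg_def split: sign.splits)
  obtain Yv Q where Yv: "v = N - supp Yv" "Q \<in> ?L" "Yv = restrict_sv ?D Q" "Yv g = Pos"
    using node[OF assms(2)] by blast
  have Qg: "Q g = Pos" using Yv gD by (simp add: restrict_sv_def)
  have Qv: "Q h = Zer" if hv: "h \<in> v" for h
  proof -
    have hN: "h \<in> N" and "Yv h = Zer" using hv Yv(1) by (auto simp: supp_def)
    moreover have "h \<in> ?D" using hN ND by blast
    ultimately show ?thesis using Yv(3) by (simp add: restrict_sv_def)
  qed
  have vN: "v \<subseteq> N" using Yv by auto
  let ?Lc = "covectors (contraction M {f,g})"
  have Lc: "?Lc = {X \<in> ?L. X f = Zer \<and> X g = Zer}" by (rule contr_cov[OF om])
  have negLc: "\<forall>X\<in>?Lc. neg_sv X \<in> ?Lc" using negL unfolding Lc by (auto simp: neg_sv_def)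
  have elimLc: "\<forall>X\<in>?Lc. \<forall>Y\<in>?Lc. \<forall>e\<in>sep X Y. \<exists>Z\<in>?Lc. Z e = Zer \<and> (\<forall>h. h \<notin> sep X Y \<longrightarrow> Z h = comp_sv X Y h)"
  proof (intro ballI)
    fix X Y e assume X: "X \<in> ?Lc" and Y: "Y \<in> ?Lc" and e: "e \<in> sep X Y"
    obtain Z where Z: "Z \<in> ?L" "Z e = Zer" "\<forall>h. h \<notin> sep X Y \<longrightarrow> Z h = comp_sv X Y h"
      using elimL X Y e unfolding Lc by blast
    have "f \<notin> sep X Y" "g \<notin> sep X Y" using X unfolding Lc by (auto simp: sep_def)
    then have "Z f = Zer" "Z g = Zer" using Z(3) X Y unfolding Lc by (auto simp: comp_sv_def)
    then show "\<exists>Z\<in>?Lc. Z e = Zer \<and> (\<forall>h. h \<notin> sep X Y \<longrightarrow> Z h = comp_sv X Y h)"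
      using Z unfolding Lc by blast
  qed
  have finLc: "\<forall>X\<in>?Lc. finite (supp X)" using subL fin unfolding Lc by (auto intro: finite_subset)
  have zeroLc: "zero_sv \<in> ?Lc" using zeroL unfolding Lc by (simp add: zero_sv_def)
  have compLc: "\<forall>X\<in>?Lc. \<forall>Y\<in>?Lc. comp_sv X Y \<in> ?Lc" using compL unfolding Lc by (auto simp: comp_sv_def)
  have key: "\<exists>C. C \<in> cocircuits (contraction M {f, g}) \<and> C e = Pos \<and> nonneg_on v C" if ev: "e \<in> v" for e
  proof -
    have eN: "e \<in> N" using ev vN by auto
    obtain Ye where Ye: "Ye \<in> cocircuits (deletion M {f})" "nonneg Ye" "Ye e = Pos" using pb eN by blast
    then have "Ye \<in> covectors (deletion M {f})" by (simp add: cocircuits_def)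
    then obtain P where P: "P \<in> ?L" "Ye = restrict_sv ?D P" unfolding cov_del by blast
    have "Ye g = Pos" using pa Ye nonneg_Pos unfolding nonneg_def by blast
    then have Pg: "P g = Pos" using P gD by (simp add: restrict_sv_def)
    have Pv: "P h \<noteq> Neg" if "h \<in> v" for h
      using that vN ND P Ye(2) unfolding nonneg_def restrict_sv_def by (metis subsetD)
    have Pe: "P e = Pos" using eN ND P Ye(3) unfolding restrict_sv_def by (metis subsetD)
    have "g \<in> sep P (neg_sv Q)" using Pg Qg by (simp add: sep_def neg_sv_def)
    moreover have "neg_sv Q \<in> ?L" using negL Yv(2) by blast
    ultimately obtain X where X: "X \<in> ?L" "X g = Zer" "\<forall>h. h \<notin> sep P (neg_sv Q) \<longrightarrow> X h = comp_sv P (neg_sv Q) h"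
      using elimL P(1) by blast
    have Xv: "X h = P h" if "h \<in> v" for h
    proof -
      have "neg_sv Q h = Zer" using Qv[OF that] by (simp add: neg_sv_def)
      then have "h \<notin> sep P (neg_sv Q)" by (auto simp: sep_def)
      then show ?thesis using X(3) \<open>neg_sv Q h = Zer\<close> by (simp add: comp_sv_def)
    qed
    have Xnn: "\<forall>h\<in>v. X h \<noteq> Neg" using Xv Pv by auto
    have Xe: "X e = Pos" using Xv[OF ev] Pe by simp
    have T: "\<exists>T\<in>?L. T f = Zer \<and> T g = Zer \<and> T e = Pos \<and> (\<forall>h\<in>v. T h \<noteq> Neg)"
    proof (cases "X f")
      case Zer then show ?thesis using X Xnn Xe by blast
    next
      case Pos then show ?thesis using combine[OF elimL X(1) _ X(2) Xe Xnn ev Y1(1) _ Y1(2) Y1(3)] Y1(4) by simp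
    next
      case Neg then show ?thesis using combine[OF elimL X(1) _ X(2) Xe Xnn ev B(1) _ B(2) B(3)] B(4) by simp
    qed
    then obtain T where T: "T \<in> ?Lc" "T e = Pos" "\<forall>h\<in>v. T h \<noteq> Neg" unfolding Lc by blast
    obtain C where C: "C \<in> ?Lc" "C \<noteq> zero_sv" "\<not>(\<exists>Y\<in>?Lc. Y \<noteq> zero_sv \<and> supp Y \<subset> supp C)"
        "C e = T e" "\<forall>j. C j \<noteq> Zer \<longrightarrow> C j = T j"
    proof -
      have "T e \<noteq> Zer" using T(2) by simp
      from conformal_cocircuit[OF negLc elimLc finLc T(1) this] that show ?thesis by blast
    qed
    have "C \<in> cocircuits (contraction M {f, g})" using C(1-3) by (simp add: cocircuits_def)
    moreover have "nonneg_on v C" unfolding nonneg_on_def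
    proof
      fix h assume "h \<in> v" then show "C h \<noteq> Neg" using C(5) T(3) by (metis sign.distinct(1))
    qed
    ultimately show ?thesis using C(4) T(2) by auto
  qed
  then obtain Ys where Ys: "\<forall>e\<in>v. Ys e \<in> cocircuits (contraction M {f, g}) \<and> Ys e e = Pos \<and> nonneg_on v (Ys e)"
    by metis
  have Ysc: "Ys e \<in> ?Lc" if "e \<in> v" for e using Ys that by (simp add: cocircuits_def)
  show ?thesis
  proof (intro exI conjI allI impI)
    show "\<forall>e\<in>v. Ys e \<in> cocircuits (contraction M {f, g}) \<and> Ys e e = Pos \<and> nonneg_on v (Ys e)" by (rule Ys)
  next
    fix es :: "'a list" assume es: "set es = v"
    show "comp_list (map Ys es) \<in> ?Lc"
      by (rule comp_list_in[OF zeroLc compLc]) (use es Ysc in auto)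
    show "\<forall>e\<in>v. comp_list (map Ys es) e = Pos"
    proof
      fix e assume ev: "e \<in> v"
      show "comp_list (map Ys es) e = Pos"
      proof (rule comp_list_pos)
        show "\<forall>X\<in>set (map Ys es). X e \<noteq> Neg" using es Ys ev by (auto simp: nonneg_on_def)
        show "\<exists>X\<in>set (map Ys es). X e = Pos" using es Ys ev by auto
      qed
    qed
  qed
qed

end
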